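(* In the converse setting below, \[ \sum_{i=1}^n I(X_i;W_1\mid Y_1^{i-1}S^{i-1})\ \ge\ \frac{(1-\epsilon)N_1L\log_2 q-h_2(\epsilon)}{1-\delta_1}. \]
   Context: Converse setting. $0<\delta_1,\delta_2<1$, $0<\epsilon\le 1/2$. Messages $W_1$ uniform on $\mathbb{F}_q^{LN_1}$ and $W_2$ uniform on $\mathbb{F}_q^{LN_2}$, and Alice's private randomness $\Theta_A$, are mutually independent. Channel states $S_1,\dots,S_n\in\{B,C,BC,\emptyset\}$ are i.i.d., independent of $(W_1,W_2,\Theta_A)$, with Bob receiving with probability $1-\delta_1$ and Calvin with probability $1-\delta_2$, independently. Inputs $X_i=f_i(W_1,W_2,\Theta_A,S^{i-1})\in\mathbb{F}_q^L$ (honest acknowledgments). Outputs: $Y_{1,i}=X_i$ if Bob receives packet $i$, else $\perp$; $Y_{2,i}=X_i$ if Calvin receives packet $i$, else $\perp$. $V^i=(V_1,\dots,V_i)$ ($V^0$ empty). There is a decoder with $\Pr\{\phi_1(Y_1^n)\ne W_1\}<\epsilon$. $h_2$ is the binary entropy function; logarithms base 2. *)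

theory Defs
  imports "HOL-Probability.Probability"
begin

text \<open>Channel states: Bob only, Calvin only, both, nobody.\<close>
datatype chstate = B | C | BC | Empt

definition bob_rx :: "chstate \<Rightarrow> bool" where
  "bob_rx s \<longleftrightarrow> s = B \<or> s = BC"

definition calvin_rx :: "chstate \<Rightarrow> bool" where
  "calvin_rx s \<longleftrightarrow> s = C \<or> s = BC"

definition state_pmf :: "real \<Rightarrow> real \<Rightarrow> chstate pmf" where
  "state_pmf d1 d2 = map_pmf (\<lambda>(b, c). if b then (if c then BC else B) else (if c then C else Empt))
      (pair_pmf (bernoulli_pmf (1 - d1)) (bernoulli_pmf (1 - d2)))"

text \<open>i.i.d. states S_1..S_n (indexed 1..n; value outside is irrelevant).\<close>
definition states_pmf :: "nat \<Rightarrow> real \<Rightarrow> real \<Rightarrow> (nat \<Rightarrow> chstate) pmf" where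
  "states_pmf n d1 d2 = Pi_pmf {1..n} Empt (\<lambda>_. state_pmf d1 d2)"

text \<open>Vectors in F_q^k as lists of length k.\<close>
definition vecs :: "nat \<Rightarrow> 'f list set" where
  "vecs k = {xs. length xs = k}"

text \<open>Joint distribution of (W1, W2, Theta_A, S): mutually independent,
  messages uniform.\<close>
definition joint_pmf :: "nat \<Rightarrow> nat \<Rightarrow> nat \<Rightarrow> 'r pmf \<Rightarrow> nat \<Rightarrow> real \<Rightarrow> real
    \<Rightarrow> ('f::{finite,field} list \<times> 'f list \<times> 'r \<times> (nat \<Rightarrow> chstate)) pmf" where
  "joint_pmf L N1 N2 \<Theta> n d1 d2 =
     pair_pmf (pmf_of_set (vecs (L * N1)))
       (pair_pmf (pmf_of_set (vecs (L * N2))) (pair_pmf \<Theta> (states_pmf n d1 d2)))"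

definition Spast :: "nat \<Rightarrow> (nat \<Rightarrow> chstate) \<Rightarrow> chstate list" where
  "Spast i s = map s [1..<i]"

definition Xin :: "(nat \<Rightarrow> 'f list \<Rightarrow> 'f list \<Rightarrow> 'r \<Rightarrow> chstate list \<Rightarrow> 'f list) \<Rightarrow> nat
    \<Rightarrow> ('f list \<times> 'f list \<times> 'r \<times> (nat \<Rightarrow> chstate)) \<Rightarrow> 'f list" where
  "Xin f i \<omega> = (case \<omega> of (w1, w2, \<theta>, s) \<Rightarrow> f i w1 w2 \<theta> (Spast i s))"

text \<open>Bob's output Y_{1,i}: X_i if received, else None (= \<bottom>).\<close>
definition Y1 :: "(nat \<Rightarrow> 'f list \<Rightarrow> 'f list \<Rightarrow> 'r \<Rightarrow> chstate list \<Rightarrow> 'f list) \<Rightarrow> nat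
    \<Rightarrow> ('f list \<times> 'f list \<times> 'r \<times> (nat \<Rightarrow> chstate)) \<Rightarrow> 'f list option" where
  "Y1 f i \<omega> = (if bob_rx (snd (snd (snd \<omega>)) i) then Some (Xin f i \<omega>) else None)"

definition Y1past :: "(nat \<Rightarrow> 'f list \<Rightarrow> 'f list \<Rightarrow> 'r \<Rightarrow> chstate list \<Rightarrow> 'f list) \<Rightarrow> nat
    \<Rightarrow> ('f list \<times> 'f list \<times> 'r \<times> (nat \<Rightarrow> chstate)) \<Rightarrow> 'f list option list" where
  "Y1past f i \<omega> = map (\<lambda>j. Y1 f j \<omega>) [1..<i]"

definition cmi :: "'a pmf \<Rightarrow> ('a \<Rightarrow> 'x) \<Rightarrow> ('a \<Rightarrow> 'y) \<Rightarrow> ('a \<Rightarrow> 'z) \<Rightarrow> real" where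
  "cmi P X Y Z = prob_space.conditional_mutual_information (measure_pmf P) 2
     (count_space (X ` space (measure_pmf P))) (count_space (Y ` space (measure_pmf P)))
     (count_space (Z ` space (measure_pmf P))) X Y Z"

definition h2 :: "real \<Rightarrow> real" where
  "h2 e = - e * log 2 e - (1 - e) * log 2 (1 - e)"

end

theory Submission imports Defs begin

lemma distributed_pmf:
  assumes "range X \<subseteq> A"
  shows "distributed (measure_pmf P) (count_space A) X (\<lambda>x. ennreal (pmf (map_pmf X P) x))"
  unfolding distributed_def
proof (intro conjI)
  show "distr (measure_pmf P) (count_space A) X = density (count_space A) (\<lambda>x. ennreal (pmf (map_pmf X P) x))"
  proof (rule measure_eqI)
    fix B assume "B \<in> sets (distr (measure_pmf P) (count_space A) X)"
    then have B: "B \<subseteq> A" by simp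
    have "emeasure (distr (measure_pmf P) (count_space A) X) B = emeasure (measure_pmf (map_pmf X P)) B"
      using B assms by (subst emeasure_distr) auto
    also have "\<dots> = (\<integral>\<^sup>+x. ennreal (pmf (map_pmf X P) x) * indicator B x \<partial>count_space UNIV)"
      by (subst measure_pmf_eq_density) (simp add: emeasure_density)
    also have "\<dots> = emeasure (density (count_space A) (\<lambda>x. ennreal (pmf (map_pmf X P) x))) B"
      using B
      by (simp add: emeasure_density nn_integral_count_space_indicator mult.assoc)
        (intro nn_integral_cong, auto split: split_indicator)
    finally show "emeasure (distr (measure_pmf P) (count_space A) X) B = emeasure (density (count_space A) (\<lambda>x. ennreal (pmf (map_pmf X P) x))) B" .
  qed simp
qed (use assms in auto)


lemma integrable_count_space_fin:
  fixes f :: "'a \<Rightarrow> real"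
  assumes "finite F" "\<And>x. x \<notin> F \<Longrightarrow> f x = 0"
  shows "integrable (count_space A) f"
proof -
  have fF: "finite (F \<inter> A)" using assms by simp
  have I1: "integrable (count_space A) (\<lambda>x. \<Sum>a\<in>F \<inter> A. f a * indicator {a} x)"
  proof (rule Bochner_Integration.integrable_sum)
    fix a assume a: "a \<in> F \<inter> A"
    have "integrable (count_space A) (indicat_real {a})"
      using a by (intro integrable_real_indicator) auto
    then show "integrable (count_space A) (\<lambda>x. f a * indicat_real {a} x)"
      by (rule integrable_mult_right)
  qed
  have I2: "\<And>x. x \<in> space (count_space A) \<Longrightarrow> (\<Sum>a\<in>F \<inter> A. f a * indicator {a} x) = f x"
  proof -
    fix x assume "x \<in> space (count_space A)"
    then show "(\<Sum>a\<in>F \<inter> A. f a * indicator {a} x) = f x"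
    proof -
      have "(\<Sum>a\<in>F \<inter> A. f a * indicator {a} x) = (\<Sum>a\<in>F \<inter> A. if a = x then f a else 0)"
        by (rule sum.cong) (auto simp: indicator_def)
      also have "\<dots> = (if x \<in> F \<inter> A then f x else 0)" using fF by (simp only: sum.delta)
      also have "\<dots> = f x"
      proof (cases "x \<in> F")
        case True then show ?thesis using \<open>x \<in> space (count_space A)\<close> by simp
      next
        case False then show ?thesis using assms(2)[of x] by simp
      qed
      finally show ?thesis .
    qed
  qed
  have "integrable (count_space A) (\<lambda>x. \<Sum>a\<in>F \<inter> A. f a * indicator {a} x) = integrable (count_space A) f"
    by (rule Bochner_Integration.integrable_cong[OF refl]) (rule I2)
  then show ?thesis using I1 by simp
qed

lemma integral_count_space_fin:
  fixes f :: "'a \<Rightarrow> real"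
  assumes "finite F" "F \<subseteq> A" "\<And>x. x \<notin> F \<Longrightarrow> f x = 0"
  shows "integral\<^sup>L (count_space A) f = sum f F"
proof -
  have fin: "finite {a\<in>A. f a \<noteq> 0}" using assms by (auto intro: finite_subset)
  show ?thesis
    apply (subst lebesgue_integral_count_space_finite_support[OF fin])
    apply (rule sum.mono_neutral_cong_left)
    using assms by auto
qed


lemma info_space_pmf: "information_space (measure_pmf P) 2"
  by (intro information_space.intro measure_pmf.prob_space_axioms) (simp add: information_space_axioms_def)

lemma finite_entropy_pmf:
  assumes "range X \<subseteq> A" "finite (X ` set_pmf P)"
  shows "information_space.finite_entropy (measure_pmf P) 2 (count_space A) X (\<lambda>x. pmf (map_pmf X P) x)"
proof -
  interpret information_space "measure_pmf P" 2 by (rule info_space_pmf)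
  show ?thesis unfolding finite_entropy_def
  proof (intro conjI ballI)
    show "distributed (measure_pmf P) (count_space A) X (\<lambda>x. ennreal (pmf (map_pmf X P) x))"
      by (rule distributed_pmf[OF assms(1)])
    show "integrable (count_space A) (\<lambda>x. pmf (map_pmf X P) x * log 2 (pmf (map_pmf X P) x))"
      by (rule integrable_count_space_fin[OF assms(2)]) (simp add: pmf_eq_0_set_pmf)
  qed simp
qed

lemma cmi_bridge:
  fixes P :: "'a pmf" and X :: "'a \<Rightarrow> 'x" and Y :: "'a \<Rightarrow> 'y" and Z :: "'a \<Rightarrow> 'z"
  assumes cX: "countable (range X)" and cY: "countable (range Y)" and cZ: "countable (range Z)"
    and fX: "finite (X ` set_pmf P)" and fY: "finite (Y ` set_pmf P)" and fZ: "finite (Z ` set_pmf P)"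
  shows "cmi P X Y Z = (\<Sum>(x,y,z) \<in> (\<lambda>\<omega>. (X \<omega>, Y \<omega>, Z \<omega>)) ` set_pmf P.
     pmf (map_pmf (\<lambda>\<omega>. (X \<omega>, Y \<omega>, Z \<omega>)) P) (x,y,z) *
       log 2 (pmf (map_pmf (\<lambda>\<omega>. (X \<omega>, Y \<omega>, Z \<omega>)) P) (x,y,z) /
         (pmf (map_pmf (\<lambda>\<omega>. (X \<omega>, Z \<omega>)) P) (x,z) *
          (pmf (map_pmf (\<lambda>\<omega>. (Y \<omega>, Z \<omega>)) P) (y,z) / pmf (map_pmf Z P) z))))"
proof -
  interpret information_space "measure_pmf P" 2 by (rule info_space_pmf)
  let ?S = "count_space (range X)" and ?T = "count_space (range Y)" and ?U = "count_space (range Z)"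
  have fXZ: "finite ((\<lambda>\<omega>. (X \<omega>, Z \<omega>)) ` set_pmf P)"
    by (rule finite_subset[OF _ finite_cartesian_product[OF fX fZ]]) auto
  have fYZ: "finite ((\<lambda>\<omega>. (Y \<omega>, Z \<omega>)) ` set_pmf P)"
    by (rule finite_subset[OF _ finite_cartesian_product[OF fY fZ]]) auto
  have fXYZ: "finite ((\<lambda>\<omega>. (X \<omega>, Y \<omega>, Z \<omega>)) ` set_pmf P)"
    by (rule finite_subset[OF _ finite_cartesian_product[OF fX finite_cartesian_product[OF fY fZ]]]) auto
  have TU: "?T \<Otimes>\<^sub>M ?U = count_space (range Y \<times> range Z)"
    using cY cZ by (rule pair_measure_countable)
  have SU: "?S \<Otimes>\<^sub>M ?U = count_space (range X \<times> range Z)"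
    using cX cZ by (rule pair_measure_countable)
  have STU: "?S \<Otimes>\<^sub>M ?T \<Otimes>\<^sub>M ?U = count_space (range X \<times> range Y \<times> range Z)"
    using cX cY cZ by (simp add: TU pair_measure_countable)
  have S: "sigma_finite_measure ?S" using cX by (rule sigma_finite_measure_count_space_countable)
  have T: "sigma_finite_measure ?T" using cY by (rule sigma_finite_measure_count_space_countable)
  have U: "sigma_finite_measure ?U" using cZ by (rule sigma_finite_measure_count_space_countable)
  have F1: "finite_entropy ?S X (pmf (map_pmf X P))"
      by (rule finite_entropy_pmf[OF _ fX]) auto
  have F2: "finite_entropy ?U Z (pmf (map_pmf Z P))"
      by (rule finite_entropy_pmf[OF _ fZ]) auto
  have F3: "finite_entropy (?T \<Otimes>\<^sub>M ?U) (\<lambda>x. (Y x, Z x)) (pmf (map_pmf (\<lambda>\<omega>. (Y \<omega>, Z \<omega>)) P))"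
      unfolding TU by (rule finite_entropy_pmf[OF _ fYZ]) auto
  have F4: "finite_entropy (?S \<Otimes>\<^sub>M ?U) (\<lambda>x. (X x, Z x)) (pmf (map_pmf (\<lambda>\<omega>. (X \<omega>, Z \<omega>)) P))"
      unfolding SU by (rule finite_entropy_pmf[OF _ fXZ]) auto
  have F5: "finite_entropy (?S \<Otimes>\<^sub>M ?T \<Otimes>\<^sub>M ?U) (\<lambda>x. (X x, Y x, Z x)) (pmf (map_pmf (\<lambda>\<omega>. (X \<omega>, Y \<omega>, Z \<omega>)) P))"
      unfolding STU by (rule finite_entropy_pmf[OF _ fXYZ]) auto
  note eq = conditional_mutual_information_generic_eq'[OF S T U F1 F2 F3 F4 F5]
  show ?thesis
    unfolding cmi_def space_measure_pmf eq STU
    apply (subst integral_count_space_fin[OF fXYZ])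
    apply auto[1]
    apply (auto simp: pmf_eq_0_set_pmf)[1]
    apply (simp add: case_prod_beta)
    done
qed


definition Hc :: "('w \<times> 'z) pmf \<Rightarrow> real" where
  "Hc D = measure_pmf.expectation D (\<lambda>t. - log 2 (pmf D t / pmf (map_pmf snd D) (snd t)))"

lemma pmf_pos_map:
  assumes "\<omega> \<in> set_pmf P" shows "pmf (map_pmf V P) (V \<omega>) > 0"
  using assms by (simp add: pmf_positive)

lemma expectation_via_image:
  fixes G :: "'v \<Rightarrow> real"
  assumes "finite (V ` set_pmf P)"
  shows "measure_pmf.expectation P (\<lambda>\<omega>. G (V \<omega>)) = (\<Sum>v\<in>V ` set_pmf P. pmf (map_pmf V P) v * G v)"
proof -
  have "measure_pmf.expectation P (\<lambda>\<omega>. G (V \<omega>)) = measure_pmf.expectation (map_pmf V P) G"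
    by simp
  also have "\<dots> = (\<Sum>v\<in>V ` set_pmf P. G v * pmf (map_pmf V P) v)"
    by (rule integral_measure_pmf_real) (use assms in auto)
  finally show ?thesis by (simp add: mult.commute)
qed

lemma cmi_Hc:
  fixes P :: "'a pmf" and X :: "'a \<Rightarrow> 'x" and Y :: "'a \<Rightarrow> 'y" and Z :: "'a \<Rightarrow> 'z"
  assumes cX: "countable (range X)" and cY: "countable (range Y)" and cZ: "countable (range Z)"
    and fX: "finite (X ` set_pmf P)" and fY: "finite (Y ` set_pmf P)" and fZ: "finite (Z ` set_pmf P)"
  shows "cmi P X Y Z = Hc (map_pmf (\<lambda>\<omega>. (Y \<omega>, Z \<omega>)) P) - Hc (map_pmf (\<lambda>\<omega>. (Y \<omega>, (X \<omega>, Z \<omega>))) P)"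
proof -
  define V where "V = (\<lambda>\<omega>. (X \<omega>, Y \<omega>, Z \<omega>))"
  define F where "F = V ` set_pmf P"
  have fF: "finite F" unfolding F_def V_def
    by (rule finite_subset[OF _ finite_cartesian_product[OF fX finite_cartesian_product[OF fY fZ]]]) auto
  let ?pV = "pmf (map_pmf V P)"
  let ?pXZ = "pmf (map_pmf (\<lambda>\<omega>. (X \<omega>, Z \<omega>)) P)"
  let ?pYZ = "pmf (map_pmf (\<lambda>\<omega>. (Y \<omega>, Z \<omega>)) P)"
  let ?pZ = "pmf (map_pmf Z P)"
  let ?pYXZ = "pmf (map_pmf (\<lambda>\<omega>. (Y \<omega>, (X \<omega>, Z \<omega>))) P)"
  have e1: "Hc (map_pmf (\<lambda>\<omega>. (Y \<omega>, Z \<omega>)) P) = (\<Sum>(x,y,z)\<in>F. ?pV (x,y,z) * - log 2 (?pYZ (y,z) / ?pZ z))"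
  proof -
    have "Hc (map_pmf (\<lambda>\<omega>. (Y \<omega>, Z \<omega>)) P) = measure_pmf.expectation P (\<lambda>\<omega>. (\<lambda>(x,y,z). - log 2 (?pYZ (y,z) / ?pZ z)) (V \<omega>))"
      unfolding Hc_def by (simp add: map_pmf_comp V_def)
    also have "\<dots> = (\<Sum>v\<in>F. ?pV v * (\<lambda>(x,y,z). - log 2 (?pYZ (y,z) / ?pZ z)) v)"
      unfolding F_def by (rule expectation_via_image) (use fF F_def in simp)
    finally show ?thesis by (simp add: case_prod_beta)
  qed
  have pYXZ: "?pYXZ (y,(x,z)) = ?pV (x,y,z)" for x y z
    unfolding pmf_map V_def by (rule arg_cong[where f="measure_pmf.prob P"]) auto
  have e2: "Hc (map_pmf (\<lambda>\<omega>. (Y \<omega>, (X \<omega>, Z \<omega>))) P) = (\<Sum>(x,y,z)\<in>F. ?pV (x,y,z) * - log 2 (?pV (x,y,z) / ?pXZ (x,z)))"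
  proof -
    have "Hc (map_pmf (\<lambda>\<omega>. (Y \<omega>, (X \<omega>, Z \<omega>))) P) = measure_pmf.expectation P (\<lambda>\<omega>. (\<lambda>(x,y,z). - log 2 (?pV (x,y,z) / ?pXZ (x,z))) (V \<omega>))"
      unfolding Hc_def by (simp add: map_pmf_comp V_def pYXZ)
    also have "\<dots> = (\<Sum>v\<in>F. ?pV v * (\<lambda>(x,y,z). - log 2 (?pV (x,y,z) / ?pXZ (x,z))) v)"
      unfolding F_def by (rule expectation_via_image) (use fF F_def in simp)
    finally show ?thesis by (simp add: case_prod_beta)
  qed
  have "cmi P X Y Z = (\<Sum>(x,y,z)\<in>F. ?pV (x,y,z) * log 2 (?pV (x,y,z) / (?pXZ (x,z) * (?pYZ (y,z) / ?pZ z))))"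
    unfolding F_def V_def by (rule cmi_bridge[OF cX cY cZ fX fY fZ])
  also have "\<dots> = (\<Sum>(x,y,z)\<in>F. ?pV (x,y,z) * - log 2 (?pYZ (y,z) / ?pZ z) - ?pV (x,y,z) * - log 2 (?pV (x,y,z) / ?pXZ (x,z)))"
  proof (rule sum.cong[OF refl], clarify)
    fix x y z assume "(x,y,z) \<in> F"
    then obtain \<omega> where \<omega>: "\<omega> \<in> set_pmf P" "X \<omega> = x" "Y \<omega> = y" "Z \<omega> = z" unfolding F_def V_def by auto
    have p1: "?pV (x,y,z) > 0" using pmf_pos_map[OF \<omega>(1), of V] \<omega> by (simp add: V_def)
    have p2: "?pXZ (x,z) > 0" using pmf_pos_map[OF \<omega>(1), of "\<lambda>\<omega>. (X \<omega>, Z \<omega>)"] \<omega> by simp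
    have p3: "?pYZ (y,z) > 0" using pmf_pos_map[OF \<omega>(1), of "\<lambda>\<omega>. (Y \<omega>, Z \<omega>)"] \<omega> by simp
    have p4: "?pZ z > 0" using pmf_pos_map[OF \<omega>(1), of Z] \<omega> by simp
    show "?pV (x,y,z) * log 2 (?pV (x,y,z) / (?pXZ (x,z) * (?pYZ (y,z) / ?pZ z))) =
       ?pV (x,y,z) * - log 2 (?pYZ (y,z) / ?pZ z) - ?pV (x,y,z) * - log 2 (?pV (x,y,z) / ?pXZ (x,z))"
      using p1 p2 p3 p4 by (simp add: log_divide log_mult algebra_simps)
  qed
  also have "\<dots> = Hc (map_pmf (\<lambda>\<omega>. (Y \<omega>, Z \<omega>)) P) - Hc (map_pmf (\<lambda>\<omega>. (Y \<omega>, (X \<omega>, Z \<omega>))) P)"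
    unfolding e1 e2 by (simp add: sum_subtractf case_prod_beta sum_negf)
  finally show ?thesis .
qed


lemma measure_pair_pmf_Times:
  "measure_pmf.prob (pair_pmf M N) (A1 \<times> B1) = measure_pmf.prob M A1 * measure_pmf.prob N B1"
proof -
  have "emeasure (pair_pmf M N) (A1 \<times> B1) = (\<integral>\<^sup>+x. indicator (A1 \<times> B1) x \<partial>pair_pmf M N)"
    by simp
  also have "\<dots> = (\<integral>\<^sup>+a. \<integral>\<^sup>+b. indicator A1 a * indicator B1 b \<partial>N \<partial>M)"
    by (simp add: nn_integral_pair_pmf' indicator_times)
  also have "\<dots> = (\<integral>\<^sup>+a. indicator A1 a * emeasure N B1 \<partial>M)"
    by (simp add: nn_integral_cmult)
  also have "\<dots> = emeasure M A1 * emeasure N B1"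
    by (simp add: nn_integral_multc)
  finally show ?thesis
    by (simp add: measure_def enn2real_mult)
qed

lemma Hc_expect:
  assumes "finite (set_pmf D)"
  shows "Hc (map_pmf f D) = (\<Sum>v\<in>set_pmf D. pmf D v * - log 2 (pmf (map_pmf f D) (f v) / pmf (map_pmf snd (map_pmf f D)) (snd (f v))))"
proof -
  have "Hc (map_pmf f D) = measure_pmf.expectation D (\<lambda>v. - log 2 (pmf (map_pmf f D) (f v) / pmf (map_pmf snd (map_pmf f D)) (snd (f v))))"
    unfolding Hc_def by simp
  also have "\<dots> = (\<Sum>v\<in>set_pmf D. - log 2 (pmf (map_pmf f D) (f v) / pmf (map_pmf snd (map_pmf f D)) (snd (f v))) * pmf D v)"
    by (rule integral_measure_pmf_real) (use assms in auto)
  finally show ?thesis by (simp add: mult.commute)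
qed

lemma Hc_key:
  fixes \<sigma> :: "'y pmf" and E :: "('w \<times> 'z \<times> 'x) pmf" and b :: "'y \<Rightarrow> bool"
  assumes fs: "finite (set_pmf \<sigma>)" and fE: "finite (set_pmf E)"
  shows "Hc (map_pmf (\<lambda>(y,(w,z,x)). (w, (z, y, if b y then Some x else None))) (pair_pmf \<sigma> E)) =
     measure_pmf.prob \<sigma> {y. b y} * Hc (map_pmf (\<lambda>(w,z,x). (w,(x,z))) E)
     + measure_pmf.prob \<sigma> {y. \<not> b y} * Hc (map_pmf (\<lambda>(w,z,x). (w,z)) E)"
proof -
  define \<phi> where "\<phi> = (\<lambda>(y::'y,(w::'w,z::'z,x::'x)). (w, (z, y, if b y then Some x else None)))"
  define fA where "fA = (\<lambda>(w::'w,z::'z,x::'x). (w,(x,z)))"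
  define fB where "fB = (\<lambda>(w::'w,z::'z,x::'x). (w,z))"
  define Q where "Q = pair_pmf \<sigma> E"
  define A where "A v = - log 2 (pmf (map_pmf fA E) (fA v) / pmf (map_pmf snd (map_pmf fA E)) (snd (fA v)))" for v
  define B' where "B' v = - log 2 (pmf (map_pmf fB E) (fB v) / pmf (map_pmf snd (map_pmf fB E)) (snd (fB v)))" for v
  have fQ: "finite (set_pmf Q)" using fs fE by (simp add: Q_def)
  have HA: "Hc (map_pmf fA E) = (\<Sum>v\<in>set_pmf E. pmf E v * A v)"
    unfolding A_def by (rule Hc_expect[OF fE])
  have HB: "Hc (map_pmf fB E) = (\<Sum>v\<in>set_pmf E. pmf E v * B' v)"
    unfolding B'_def by (rule Hc_expect[OF fE])
  have pt: "- log 2 (pmf (map_pmf \<phi> Q) (\<phi> (y,v)) / pmf (map_pmf snd (map_pmf \<phi> Q)) (snd (\<phi> (y,v))))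
      = (if b y then A v else B' v)" if y: "y \<in> set_pmf \<sigma>" for y v
  proof -
    obtain w z x where v: "v = (w,z,x)" by (cases v) auto
    have sy: "pmf \<sigma> y > 0" using y by (simp add: pmf_positive)
    show ?thesis
    proof (cases "b y")
      case True
      have e1: "\<phi> -` {\<phi> (y,v)} = {y} \<times> (fA -` {fA v})"
        using True unfolding \<phi>_def fA_def v by (auto split: if_splits)
      have e2: "(\<lambda>t. snd (\<phi> t)) -` {snd (\<phi> (y,v))} = {y} \<times> ((\<lambda>t. snd (fA t)) -` {snd (fA v)})"
        using True unfolding \<phi>_def fA_def v by (auto split: if_splits)
      have "pmf (map_pmf \<phi> Q) (\<phi> (y,v)) = pmf \<sigma> y * pmf (map_pmf fA E) (fA v)"
        unfolding pmf_map e1 Q_def measure_pair_pmf_Times by (simp add: measure_pmf_single)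
      moreover have "pmf (map_pmf snd (map_pmf \<phi> Q)) (snd (\<phi> (y,v))) = pmf \<sigma> y * pmf (map_pmf snd (map_pmf fA E)) (snd (fA v))"
        unfolding map_pmf_comp pmf_map e2 Q_def measure_pair_pmf_Times by (simp add: measure_pmf_single)
      ultimately show ?thesis using True sy by (simp add: A_def)
    next
      case False
      have e1: "\<phi> -` {\<phi> (y,v)} = {y} \<times> (fB -` {fB v})"
        using False unfolding \<phi>_def fB_def v by (auto split: if_splits)
      have e2: "(\<lambda>t. snd (\<phi> t)) -` {snd (\<phi> (y,v))} = {y} \<times> ((\<lambda>t. snd (fB t)) -` {snd (fB v)})"
        using False unfolding \<phi>_def fB_def v by (auto split: if_splits)
      have "pmf (map_pmf \<phi> Q) (\<phi> (y,v)) = pmf \<sigma> y * pmf (map_pmf fB E) (fB v)"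
        unfolding pmf_map e1 Q_def measure_pair_pmf_Times by (simp add: measure_pmf_single)
      moreover have "pmf (map_pmf snd (map_pmf \<phi> Q)) (snd (\<phi> (y,v))) = pmf \<sigma> y * pmf (map_pmf snd (map_pmf fB E)) (snd (fB v))"
        unfolding map_pmf_comp pmf_map e2 Q_def measure_pair_pmf_Times by (simp add: measure_pmf_single)
      ultimately show ?thesis using False sy by (simp add: B'_def)
    qed
  qed
  have "Hc (map_pmf \<phi> Q) = (\<Sum>t\<in>set_pmf Q. pmf Q t * - log 2 (pmf (map_pmf \<phi> Q) (\<phi> t) / pmf (map_pmf snd (map_pmf \<phi> Q)) (snd (\<phi> t))))"
    by (rule Hc_expect[OF fQ])
  also have "\<dots> = (\<Sum>(y,v)\<in>set_pmf \<sigma> \<times> set_pmf E. pmf \<sigma> y * (pmf E v * (if b y then A v else B' v)))"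
  proof -
    have sQ: "set_pmf Q = set_pmf \<sigma> \<times> set_pmf E" by (simp add: Q_def)
    show ?thesis unfolding sQ
    proof (rule sum.cong[OF refl])
      fix t assume "t \<in> set_pmf \<sigma> \<times> set_pmf E"
      then obtain y v where t: "t = (y,v)" "y \<in> set_pmf \<sigma>" by auto
      show "pmf Q t * - log 2 (pmf (map_pmf \<phi> Q) (\<phi> t) / pmf (map_pmf snd (map_pmf \<phi> Q)) (snd (\<phi> t))) =
        (case t of (y,v) \<Rightarrow> pmf \<sigma> y * (pmf E v * (if b y then A v else B' v)))"
        unfolding t(1) using pt[OF t(2), of v] by (simp add: Q_def pmf_pair)
    qed
  qed
  also have "\<dots> = (\<Sum>y\<in>set_pmf \<sigma>. pmf \<sigma> y * (if b y then Hc (map_pmf fA E) else Hc (map_pmf fB E)))"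
    unfolding sum.cartesian_product[symmetric] HA HB
    by (rule sum.cong[OF refl]) (simp add: sum_distrib_left)
  also have "\<dots> = (\<Sum>y\<in>set_pmf \<sigma>. (if b y then pmf \<sigma> y else 0)) * Hc (map_pmf fA E) + (\<Sum>y\<in>set_pmf \<sigma>. (if \<not> b y then pmf \<sigma> y else 0)) * Hc (map_pmf fB E)"
    by (auto simp: sum_distrib_right sum.distrib[symmetric] intro!: sum.cong)
  also have "(\<Sum>y\<in>set_pmf \<sigma>. (if b y then pmf \<sigma> y else 0)) = measure_pmf.prob \<sigma> {y. b y}"
  proof -
    have "(\<Sum>y\<in>set_pmf \<sigma>. (if b y then pmf \<sigma> y else 0)) = sum (pmf \<sigma>) ({y. b y} \<inter> set_pmf \<sigma>)"
      using fs by (simp add: sum.inter_filter[symmetric] Int_def conj_commute)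
    also have "\<dots> = measure_pmf.prob \<sigma> ({y. b y} \<inter> set_pmf \<sigma>)"
      using fs by (simp add: measure_measure_pmf_finite)
    finally show ?thesis by (simp add: measure_Int_set_pmf)
  qed
  also have "(\<Sum>y\<in>set_pmf \<sigma>. (if \<not> b y then pmf \<sigma> y else 0)) = measure_pmf.prob \<sigma> {y. \<not> b y}"
  proof -
    have "(\<Sum>y\<in>set_pmf \<sigma>. (if \<not> b y then pmf \<sigma> y else 0)) = sum (pmf \<sigma>) ({y. \<not> b y} \<inter> set_pmf \<sigma>)"
      using fs by (simp add: sum.inter_filter[symmetric] Int_def conj_commute)
    also have "\<dots> = measure_pmf.prob \<sigma> ({y. \<not> b y} \<inter> set_pmf \<sigma>)"
      using fs by (simp add: measure_measure_pmf_finite)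
    finally show ?thesis by (simp add: measure_Int_set_pmf)
  qed
  finally show ?thesis unfolding \<phi>_def Q_def fA_def fB_def .
qed


lemma Hc_inj:
  assumes "inj h"
  shows "Hc (map_pmf (\<lambda>(w,z). (w, h z)) D) = Hc D"
proof -
  let ?g = "\<lambda>(w,z). (w, h z)"
  have ig: "inj ?g" using assms by (auto simp: inj_def)
  have ms: "map_pmf snd (map_pmf ?g D) = map_pmf h (map_pmf snd D)"
    by (simp add: map_pmf_comp case_prod_beta)
  have "Hc (map_pmf ?g D) = measure_pmf.expectation D (\<lambda>t. - log 2 (pmf (map_pmf ?g D) (?g t) / pmf (map_pmf snd (map_pmf ?g D)) (snd (?g t))))"
    unfolding Hc_def by simp
  also have "\<dots> = Hc D"
    unfolding Hc_def ms
    by (rule Bochner_Integration.integral_cong[OF refl])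
       (simp add: case_prod_beta pmf_map_inj'[OF ig, of _ "(fst _, snd _)", simplified] pmf_map_inj'[OF assms])
  finally show ?thesis .
qed

lemma Hc_sum:
  assumes "finite (set_pmf D)"
  shows "Hc D = (\<Sum>t\<in>set_pmf D. pmf D t * - log 2 (pmf D t / pmf (map_pmf snd D) (snd t)))"
  using Hc_expect[OF assms, of id] by simp

lemma Hc_Gibbs:
  fixes D :: "('w \<times> 'z) pmf" and q :: "'w \<times> 'z \<Rightarrow> real"
  assumes fD: "finite (set_pmf D)" and fU: "finite U" and sU: "fst ` set_pmf D \<subseteq> U"
    and qpos: "\<And>t. t \<in> set_pmf D \<Longrightarrow> q t > 0" and qnn: "\<And>t. q t \<ge> 0"
    and qsum: "\<And>z. (\<Sum>w\<in>U. q (w,z)) \<le> 1"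
  shows "Hc D \<le> (\<Sum>t\<in>set_pmf D. pmf D t * - log 2 (q t))"
proof -
  define S where "S = set_pmf D"
  define pZ where "pZ = pmf (map_pmf snd D)"
  have pZpos: "pZ (snd t) > 0" if "t \<in> S" for t
    using that unfolding pZ_def S_def by (simp add: pmf_positive)
  have pDpos: "pmf D t > 0" if "t \<in> S" for t using that unfolding S_def by (simp add: pmf_positive)
  have fS: "finite S" using fD S_def by simp
  have step: "pmf D t * - log 2 (pmf D t / pZ (snd t)) - pmf D t * - log 2 (q t)
      \<le> (pZ (snd t) * q t - pmf D t) / ln 2" if t: "t \<in> S" for t
  proof -
    have a: "pmf D t > 0" "pZ (snd t) > 0" "q t > 0" using pDpos[OF t] pZpos[OF t] qpos t S_def by auto
    let ?r = "q t * pZ (snd t) / pmf D t"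
    have r: "?r > 0" using a by simp
    have "pmf D t * - log 2 (pmf D t / pZ (snd t)) - pmf D t * - log 2 (q t) = pmf D t * log 2 ?r"
      using a by (simp add: log_divide log_mult algebra_simps)
    also have "\<dots> = pmf D t * (ln ?r / ln 2)" by (simp add: log_def)
    also have "\<dots> \<le> pmf D t * ((?r - 1) / ln 2)"
      using a ln_le_minus_one[OF r] by (intro mult_left_mono divide_right_mono) auto
    also have "\<dots> = (pZ (snd t) * q t - pmf D t) / ln 2" using a by (simp add: field_simps)
    finally show ?thesis .
  qed
  define Zs where "Zs = snd ` S"
  have fZs: "finite Zs" using fS Zs_def by simp
  have "(\<Sum>t\<in>S. pZ (snd t) * q t) \<le> (\<Sum>t\<in>U \<times> Zs. pZ (snd t) * q t)"
  proof (rule sum_mono2)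
    show "finite (U \<times> Zs)" using fU fZs by simp
    show "S \<subseteq> U \<times> Zs" using sU unfolding Zs_def by (force simp: S_def)
    show "0 \<le> pZ (snd t) * q t" for t by (simp add: pZ_def qnn)
  qed
  also have "\<dots> = (\<Sum>z\<in>Zs. pZ z * (\<Sum>w\<in>U. q (w,z)))"
  proof -
    have "(\<Sum>t\<in>U \<times> Zs. pZ (snd t) * q t) = (\<Sum>w\<in>U. \<Sum>z\<in>Zs. pZ z * q (w,z))"
      by (simp add: sum.cartesian_product case_prod_beta)
    also have "\<dots> = (\<Sum>z\<in>Zs. \<Sum>w\<in>U. pZ z * q (w,z))" by (rule sum.swap)
    finally show ?thesis by (simp add: sum_distrib_left)
  qed
  also have "\<dots> \<le> (\<Sum>z\<in>Zs. pZ z)"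
    by (rule sum_mono) (use qsum in \<open>auto simp: pZ_def intro: mult_left_le\<close>)
  also have "\<dots> = 1" unfolding pZ_def Zs_def S_def by (rule sum_pmf_eq_1) (use fD in auto)
  finally have s1: "(\<Sum>t\<in>S. pZ (snd t) * q t) \<le> 1" .
  have s2: "(\<Sum>t\<in>S. pmf D t) = 1" unfolding S_def by (rule sum_pmf_eq_1) (use fD in auto)
  have "Hc D - (\<Sum>t\<in>S. pmf D t * - log 2 (q t)) = (\<Sum>t\<in>S. pmf D t * - log 2 (pmf D t / pZ (snd t)) - pmf D t * - log 2 (q t))"
    unfolding Hc_sum[OF fD] S_def pZ_def by (simp add: sum_subtractf sum_negf)
  also have "\<dots> \<le> (\<Sum>t\<in>S. (pZ (snd t) * q t - pmf D t) / ln 2)"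
    by (rule sum_mono) (rule step)
  also have "\<dots> = ((\<Sum>t\<in>S. pZ (snd t) * q t) - (\<Sum>t\<in>S. pmf D t)) / ln 2"
    by (simp add: sum_divide_distrib[symmetric] sum_subtractf)
  also have "\<dots> \<le> 0" using s1 s2 by (simp add: divide_nonpos_pos)
  finally show ?thesis unfolding S_def by simp
qed


lemma prob_as_sum:
  assumes "finite (set_pmf D)"
  shows "measure_pmf.prob D {t. Q t} = (\<Sum>t\<in>set_pmf D. if Q t then pmf D t else 0)"
proof -
  have "(\<Sum>t\<in>set_pmf D. if Q t then pmf D t else 0) = sum (pmf D) ({t. Q t} \<inter> set_pmf D)"
    using assms by (simp add: sum.inter_filter[symmetric] Int_def conj_commute)
  also have "\<dots> = measure_pmf.prob D ({t. Q t} \<inter> set_pmf D)"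
    using assms by (simp add: measure_measure_pmf_finite)
  finally show ?thesis by (simp add: measure_Int_set_pmf)
qed

lemma h2_nonneg: assumes "0 < e" "e < 1" shows "0 \<le> h2 e"
proof -
  have "log 2 e \<le> 0" "log 2 (1 - e) \<le> 0" using assms by auto
  then have "e * log 2 e \<le> 0" "(1 - e) * log 2 (1 - e) \<le> 0" using assms
    by (auto intro: mult_nonneg_nonpos)
  then show ?thesis unfolding h2_def by linarith
qed

lemma Hc_Fano:
  fixes D :: "('w \<times> 'z) pmf" and g :: "'z \<Rightarrow> 'w"
  assumes fD: "finite (set_pmf D)" and fU: "finite U" and sU: "fst ` set_pmf D \<subseteq> U"
    and pe: "measure_pmf.prob D {t. g (snd t) \<noteq> fst t} \<le> \<epsilon>" and e: "0 < \<epsilon>" "\<epsilon> \<le> 1/2"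
  shows "Hc D \<le> h2 \<epsilon> + \<epsilon> * log 2 (card U)"
proof -
  define M where "M = card U"
  have "U \<noteq> {}" using sU set_pmf_not_empty[of D] by auto
  then have M1: "M \<ge> 1" using fU M_def by (simp add: Suc_le_eq card_gt_0_iff)
  have h2nn: "0 \<le> h2 \<epsilon>" using e by (intro h2_nonneg) auto
  show ?thesis
  proof (cases "M = 1")
    case True
    have "Hc D \<le> (\<Sum>t\<in>set_pmf D. pmf D t * - log 2 ((\<lambda>_. 1::real) t))"
      by (rule Hc_Gibbs[OF fD fU sU]) (use True M_def in auto)
    also have "\<dots> = 0" by simp
    finally show ?thesis using h2nn True M_def by simp
  next
    case False
    then have M2: "M \<ge> 2" using M1 by simp
    define c where "c = \<epsilon> / (real M - 1)"
    have c: "c > 0" "(real M - 1) * c = \<epsilon>" using M2 e by (auto simp: c_def)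
    define q where "q t = (if fst t = g (snd t) then 1 - \<epsilon> else c)" for t
    have qpos: "q t > 0" for t using c e by (simp add: q_def)
    have qsum: "(\<Sum>w\<in>U. q (w,z)) \<le> 1" for z
    proof -
      have "(\<Sum>w\<in>U. q (w,z)) = (\<Sum>w\<in>U. c + (if w = g z then 1 - \<epsilon> - c else 0))"
        by (rule sum.cong) (auto simp: q_def)
      also have "\<dots> = M * c + (if g z \<in> U then 1 - \<epsilon> - c else 0)"
        using fU by (simp add: sum.distrib M_def sum.delta')
      also have "\<dots> \<le> 1"
      proof (cases "g z \<in> U")
        case True then show ?thesis using c by (simp add: algebra_simps)
      next
        case False
        have "real M * \<epsilon> \<le> real M - 1" using M2 e
        proof -
          have "real M * \<epsilon> \<le> real M * (1/2)" using e by (intro mult_left_mono) auto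
          also have "\<dots> \<le> real M - 1" using M2 by simp
          finally show ?thesis .
        qed
        then have "real M * c \<le> 1" using M2 by (simp add: c_def field_simps)
        then show ?thesis using False by simp
      qed
      finally show ?thesis .
    qed
    define K where "K = log 2 (1 - \<epsilon>) - log 2 c"
    have K: "K \<ge> 0"
    proof -
      have "c \<le> \<epsilon>" using M2 e by (simp add: c_def field_simps)
      also have "\<epsilon> \<le> 1 - \<epsilon>" using e by simp
      finally show ?thesis using c unfolding K_def by simp
    qed
    have lq: "- log 2 (q t) = - log 2 (1 - \<epsilon>) + (if g (snd t) \<noteq> fst t then K else 0)" for t
      by (auto simp: q_def K_def)
    have "Hc D \<le> (\<Sum>t\<in>set_pmf D. pmf D t * - log 2 (q t))"
      by (rule Hc_Gibbs[OF fD fU sU]) (use qpos qsum in \<open>auto intro: less_imp_le\<close>)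
    also have "\<dots> = (\<Sum>t\<in>set_pmf D. pmf D t * - log 2 (1 - \<epsilon>) + K * (if g (snd t) \<noteq> fst t then pmf D t else 0))"
      by (rule sum.cong) (auto simp: lq algebra_simps)
    also have "\<dots> = - log 2 (1 - \<epsilon>) * (\<Sum>t\<in>set_pmf D. pmf D t) + K * measure_pmf.prob D {t. g (snd t) \<noteq> fst t}"
      by (simp add: sum.distrib sum_distrib_left sum_distrib_right prob_as_sum[OF fD] mult.commute sum_subtractf)
    also have "\<dots> = - log 2 (1 - \<epsilon>) + K * measure_pmf.prob D {t. g (snd t) \<noteq> fst t}"
      using sum_pmf_eq_1[OF fD subset_refl] by simp
    also have "\<dots> \<le> - log 2 (1 - \<epsilon>) + K * \<epsilon>"
      using K pe by (simp add: mult_left_mono)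
    also have "\<dots> = h2 \<epsilon> + \<epsilon> * log 2 (real M - 1)"
      using e M2 unfolding K_def c_def h2_def by (simp add: log_divide algebra_simps)
    also have "\<dots> \<le> h2 \<epsilon> + \<epsilon> * log 2 (card U)"
      using e M2 unfolding M_def by (auto intro!: mult_left_mono)
    finally show ?thesis .
  qed
qed


lemma states_decomp:
  assumes "i \<in> {1..n}"
  shows "states_pmf n d1 d2 = map_pmf (\<lambda>(y,g). g(i:=y)) (pair_pmf (state_pmf d1 d2) (Pi_pmf ({1..n} - {i}) Empt (\<lambda>_. state_pmf d1 d2)))"
proof -
  have "{1..n} = insert i ({1..n} - {i})" using assms by auto
  then show ?thesis unfolding states_pmf_def
    by (metis Pi_pmf_insert finite_Diff finite_atLeastAtMost Diff_iff singletonI)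
qed

lemma joint_decomp:
  assumes "i \<in> {1..n}"
  shows "joint_pmf L N1 N2 \<Theta> n d1 d2 = map_pmf (\<lambda>(y,(w1,w2,\<theta>,g)). (w1,w2,\<theta>,g(i:=y)))
     (pair_pmf (state_pmf d1 d2) (pair_pmf (pmf_of_set (vecs (L * N1)))
       (pair_pmf (pmf_of_set (vecs (L * N2))) (pair_pmf \<Theta> (Pi_pmf ({1..n} - {i}) Empt (\<lambda>_. state_pmf d1 d2))))))"
  unfolding joint_pmf_def states_decomp[OF assms]
  unfolding pair_pmf_def map_pmf_def bind_assoc_pmf bind_return_pmf
  apply (rule sym)
  apply (subst bind_commute_pmf[of "state_pmf d1 d2" "pmf_of_set (vecs (L * N1))"])
  apply (rule bind_pmf_cong[OF refl])
  apply (subst bind_commute_pmf[of "state_pmf d1 d2" "pmf_of_set (vecs (L * N2))"])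
  apply (rule bind_pmf_cong[OF refl])
  apply (subst bind_commute_pmf[of "state_pmf d1 d2" "\<Theta>"])
  apply (rule bind_pmf_cong[OF refl])
  apply (simp add: bind_return_pmf bind_assoc_pmf)
  done


definition Zv :: "(nat \<Rightarrow> 'f list \<Rightarrow> 'f list \<Rightarrow> 'r \<Rightarrow> chstate list \<Rightarrow> 'f list) \<Rightarrow> nat
    \<Rightarrow> ('f list \<times> 'f list \<times> 'r \<times> (nat \<Rightarrow> chstate)) \<Rightarrow> 'f list option list \<times> chstate list" where
  "Zv f i \<omega> = (Y1past f i \<omega>, Spast i (snd (snd (snd \<omega>))))"

definition Fi :: "nat \<Rightarrow> chstate \<Rightarrow> ('f list \<times> 'f list \<times> 'r \<times> (nat \<Rightarrow> chstate)) \<Rightarrow> ('f list \<times> 'f list \<times> 'r \<times> (nat \<Rightarrow> chstate))" where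
  "Fi i y \<omega> = (case \<omega> of (w1,w2,\<theta>,g) \<Rightarrow> (w1,w2,\<theta>,g(i:=y)))"

lemma Spast_upd: "j \<le> i \<Longrightarrow> Spast j (g(i:=y)) = Spast j g"
  unfolding Spast_def by auto

lemma Xin_Fi: "j \<le> i \<Longrightarrow> Xin f j (Fi i y \<omega>) = Xin f j \<omega>"
  unfolding Xin_def Fi_def by (cases \<omega>) (auto simp: Spast_upd)

lemma Y1_Fi: "j < i \<Longrightarrow> Y1 f j (Fi i y \<omega>) = Y1 f j \<omega>"
  unfolding Y1_def using Xin_Fi[of j i f y \<omega>] by (cases \<omega>) (auto simp: Fi_def)

lemma Y1past_Fi: "j \<le> i \<Longrightarrow> Y1past f j (Fi i y \<omega>) = Y1past f j \<omega>"
  unfolding Y1past_def by (intro map_cong refl Y1_Fi) auto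

lemma Zv_Fi: "Zv f i (Fi i y \<omega>) = Zv f i \<omega>"
  unfolding Zv_def using Y1past_Fi[of i i f y \<omega>] by (cases \<omega>) (auto simp: Fi_def Spast_upd)

lemma Y1_Fi_same: "Y1 f i (Fi i y \<omega>) = (if bob_rx y then Some (Xin f i \<omega>) else None)"
  unfolding Y1_def using Xin_Fi[of i i f y \<omega>] by (cases \<omega>) (auto simp: Fi_def)

lemma Zv_Suc: "1 \<le> i \<Longrightarrow> Zv f (Suc i) \<omega> = (fst (Zv f i \<omega>) @ [Y1 f i \<omega>], snd (Zv f i \<omega>) @ [snd (snd (snd \<omega>)) i])"
  unfolding Zv_def Y1past_def Spast_def by (simp add: upt_Suc_append)

lemma fst_Fi: "fst (Fi i y \<omega>) = fst \<omega>" by (cases \<omega>) (simp add: Fi_def)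
lemma S_Fi: "snd (snd (snd (Fi i y \<omega>))) i = y" by (cases \<omega>) (simp add: Fi_def)

lemma law_step:
  fixes f :: "nat \<Rightarrow> 'f::{finite,field} list \<Rightarrow> 'f list \<Rightarrow> 'r \<Rightarrow> chstate list \<Rightarrow> 'f list"
    and \<Theta> :: "'r pmf"
  assumes i: "i \<in> {1..n}"
  assumes P_def: "P = joint_pmf L N1 N2 \<Theta> n d1 d2"
  shows "map_pmf (\<lambda>\<omega>. (fst \<omega>, Zv f (Suc i) \<omega>)) P =
    map_pmf (\<lambda>(w,z). (w, (\<lambda>(z0, y, yo). (fst z0 @ [yo], snd z0 @ [y])) z))
      (map_pmf (\<lambda>(y,(w,z,x)). (w, (z, y, if bob_rx y then Some x else None)))
        (pair_pmf (state_pmf d1 d2) (map_pmf (\<lambda>\<omega>. (fst \<omega>, Zv f i \<omega>, Xin f i \<omega>)) P)))"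
proof -
  define R where "R = pair_pmf (pmf_of_set (vecs (L * N1)) :: 'f list pmf)
       (pair_pmf (pmf_of_set (vecs (L * N2)) :: 'f list pmf) (pair_pmf \<Theta> (Pi_pmf ({1..n} - {i}) Empt (\<lambda>_. state_pmf d1 d2))))"
  have PF: "P = map_pmf (\<lambda>(y,\<omega>). Fi i y \<omega>) (pair_pmf (state_pmf d1 d2) R)"
    unfolding P_def R_def joint_decomp[OF i] Fi_def
    by (auto intro!: map_pmf_cong simp: case_prod_beta)
  have i1: "1 \<le> i" using i by simp
  have mV: "map_pmf (\<lambda>\<omega>. (fst \<omega>, Zv f i \<omega>, Xin f i \<omega>)) P = map_pmf (\<lambda>\<omega>. (fst \<omega>, Zv f i \<omega>, Xin f i \<omega>)) R"
  proof -
    have "map_pmf (\<lambda>\<omega>. (fst \<omega>, Zv f i \<omega>, Xin f i \<omega>)) P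
        = map_pmf (\<lambda>\<omega>. (fst \<omega>, Zv f i \<omega>, Xin f i \<omega>)) (map_pmf snd (pair_pmf (state_pmf d1 d2) R))"
      unfolding PF map_pmf_comp
      by (intro map_pmf_cong refl) (auto simp: fst_Fi Zv_Fi Xin_Fi)
    then show ?thesis by (simp add: map_snd_pair_pmf)
  qed
  show ?thesis
    unfolding mV pair_map_pmf2 map_pmf_comp
    unfolding PF map_pmf_comp
    by (intro map_pmf_cong refl) (auto simp: fst_Fi Zv_Suc[OF i1] Zv_Fi Y1_Fi_same S_Fi)
qed


lemma finite_chstate: "finite (UNIV :: chstate set)"
proof -
  have "UNIV = {B, C, BC, Empt}" using chstate.exhaust by auto
  then show ?thesis by (metis finite.emptyI finite.insertI)
qed

lemma finite_vecs: "finite (vecs k :: 'f::finite list set)"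
proof -
  have "vecs k = {xs :: 'f list. set xs \<subseteq> UNIV \<and> length xs = k}" by (simp add: vecs_def)
  then show ?thesis using finite_lists_length_eq[of "UNIV :: 'f set" k] by simp
qed

lemma card_vecs: "card (vecs k :: 'f::finite list set) = CARD('f) ^ k"
proof -
  have "vecs k = {xs :: 'f list. set xs \<subseteq> UNIV \<and> length xs = k}" by (simp add: vecs_def)
  then show ?thesis using card_lists_length_eq[of "UNIV :: 'f set" k] by simp
qed

lemma vecs_ne: "vecs k \<noteq> {}"
  unfolding vecs_def by (auto intro: exI[of _ "replicate k undefined"])

lemma set_pmf_vecs: "set_pmf (pmf_of_set (vecs k :: 'f::finite list set)) = vecs k"
  by (intro set_pmf_of_set vecs_ne finite_vecs)

lemma state_bob: "0 \<le> d1 \<Longrightarrow> d1 \<le> 1 \<Longrightarrow> measure_pmf.prob (state_pmf d1 d2) {y. bob_rx y} = 1 - d1"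
proof -
  assume d: "0 \<le> d1" "d1 \<le> 1"
  have e: "(\<lambda>(b, c). if b then (if c then BC else B) else (if c then C else Empt)) -` {y. bob_rx y} = {True} \<times> UNIV"
    by (auto simp: bob_rx_def split: if_splits)
  show ?thesis unfolding state_pmf_def measure_map_pmf e measure_pair_pmf_Times
    using d by (simp add: measure_pmf_single)
qed

lemma state_nbob: "0 \<le> d1 \<Longrightarrow> d1 \<le> 1 \<Longrightarrow> measure_pmf.prob (state_pmf d1 d2) {y. \<not> bob_rx y} = d1"
proof -
  assume d: "0 \<le> d1" "d1 \<le> 1"
  have e: "(\<lambda>(b, c). if b then (if c then BC else B) else (if c then C else Empt)) -` {y. \<not> bob_rx y} = {False} \<times> UNIV"
    by (auto simp: bob_rx_def split: if_splits)
  show ?thesis unfolding state_pmf_def measure_map_pmf e measure_pair_pmf_Times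
    using d by (simp add: measure_pmf_single)
qed

lemma Hc_const:
  assumes "finite U" "U \<noteq> {}"
  shows "Hc (map_pmf (\<lambda>w. (w, c)) (pmf_of_set U)) = log 2 (card U)"
proof -
  define D where "D = map_pmf (\<lambda>w. (w, c)) (pmf_of_set U)"
  have inj: "inj (\<lambda>w. (w, c))" by (auto simp: inj_def)
  have sD: "set_pmf D = (\<lambda>w. (w, c)) ` U" using assms by (simp add: D_def)
  have fD: "finite (set_pmf D)" using sD assms by simp
  have ms: "map_pmf snd D = return_pmf c" by (simp add: D_def map_pmf_comp)
  have pD: "pmf D (w, c) = 1 / card U" if "w \<in> U" for w
    using that assms unfolding D_def by (simp add: pmf_map_inj'[OF inj])
  have "Hc D = (\<Sum>t\<in>(\<lambda>w. (w, c)) ` U. pmf D t * - log 2 (pmf D t / pmf (map_pmf snd D) (snd t)))"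
    using Hc_sum[OF fD] sD by simp
  also have "\<dots> = (\<Sum>w\<in>U. (1 / card U) * - log 2 (1 / card U))"
    by (subst sum.reindex) (use inj in \<open>auto simp: inj_on_def pD ms intro!: sum.cong\<close>)
  also have "\<dots> = log 2 (card U)"
    using assms by (simp add: log_divide)
  finally show ?thesis unfolding D_def .
qed


lemma range_Xin:
  assumes "\<And>i w1 w2 \<theta> ss. length (f i w1 w2 \<theta> ss) = L"
  shows "range (Xin f i) \<subseteq> vecs L"
  using assms by (auto simp: Xin_def vecs_def split: prod.splits)

lemma finite_range_Zv:
  fixes f :: "nat \<Rightarrow> 'f::finite list \<Rightarrow> 'f list \<Rightarrow> 'r \<Rightarrow> chstate list \<Rightarrow> 'f list"
  assumes "\<And>i w1 w2 \<theta> ss. length (f i w1 w2 \<theta> ss) = L"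
  shows "finite (range (Zv f i))"
proof -
  define A where "A = {xs. set xs \<subseteq> insert None (Some ` (vecs L :: 'f list set)) \<and> length xs = i - 1}"
  define B where "B = {xs. set xs \<subseteq> (UNIV :: chstate set) \<and> length xs = i - 1}"
  have "finite A" unfolding A_def by (intro finite_lists_length_eq) (simp add: finite_vecs)
  moreover have "finite B" unfolding B_def by (intro finite_lists_length_eq finite_chstate)
  moreover have "range (Zv f i) \<subseteq> A \<times> B"
  proof
    fix z assume "z \<in> range (Zv f i)"
    then obtain \<omega> where z: "z = Zv f i \<omega>" by auto
    have "Y1 f j \<omega> \<in> insert None (Some ` vecs L)" for j
    proof -
      have "range (Xin f j) \<subseteq> vecs L" by (rule range_Xin) (rule assms)
      then show ?thesis by (auto simp: Y1_def)
    qed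
    then show "z \<in> A \<times> B" unfolding z Zv_def A_def B_def Y1past_def Spast_def by auto
  qed
  ultimately show ?thesis by (meson finite_SigmaI finite_subset)
qed

lemma fst_set_joint: "fst ` set_pmf (joint_pmf L N1 N2 \<Theta> n d1 d2 :: ('f::{finite,field} list \<times> _) pmf) \<subseteq> vecs (L * N1)"
  unfolding joint_pmf_def by (auto simp: set_pmf_vecs)

lemma map_fst_joint: "map_pmf fst (joint_pmf L N1 N2 \<Theta> n d1 d2 :: ('f::{finite,field} list \<times> _) pmf) = pmf_of_set (vecs (L * N1))"
  unfolding joint_pmf_def by (simp add: map_fst_pair_pmf)

lemma finite_state: "finite (set_pmf (state_pmf d1 d2))"
  using finite_chstate by (rule finite_subset[rotated]) simp


theorem lemma9:
  fixes L N1 N2 n :: nat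
    and \<delta>1 \<delta>2 \<epsilon> :: real
    and \<Theta> :: "'r pmf"
    and f :: "nat \<Rightarrow> 'f::{finite,field} list \<Rightarrow> 'f list \<Rightarrow> 'r \<Rightarrow> chstate list \<Rightarrow> 'f list"
    and \<phi>1 :: "'f list option list \<Rightarrow> 'f list"
  assumes d1: "0 < \<delta>1" "\<delta>1 < 1"
    and d2: "0 < \<delta>2" "\<delta>2 < 1"
    and eps: "0 < \<epsilon>" "\<epsilon> \<le> 1/2"
    and f_len: "\<And>i w1 w2 \<theta> ss. length (f i w1 w2 \<theta> ss) = L"
    and dec: "measure_pmf.prob (joint_pmf L N1 N2 \<Theta> n \<delta>1 \<delta>2)
                {\<omega>. \<phi>1 (Y1past f (n + 1) \<omega>) \<noteq> fst \<omega>} < \<epsilon>"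
  shows "(\<Sum>i = 1..n. cmi (joint_pmf L N1 N2 \<Theta> n \<delta>1 \<delta>2) (Xin f i) fst
            (\<lambda>\<omega>. (Y1past f i \<omega>, Spast i (snd (snd (snd \<omega>))))))
         \<ge> ((1 - \<epsilon>) * real N1 * real L * log 2 (real CARD('f)) - h2 \<epsilon>) / (1 - \<delta>1)"
proof -
  define P where "P = (joint_pmf L N1 N2 \<Theta> n \<delta>1 \<delta>2 :: ('f list \<times> 'f list \<times> 'r \<times> (nat \<Rightarrow> chstate)) pmf)"
  define a where "a i = Hc (map_pmf (\<lambda>\<omega>. (fst \<omega>, Zv f i \<omega>)) P)" for i
  define bb where "bb i = Hc (map_pmf (\<lambda>\<omega>. (fst \<omega>, (Xin f i \<omega>, Zv f i \<omega>))) P)" for i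
  define Q0 where "Q0 = real (L * N1) * log 2 (real CARD('f))"
  have rX: "range (Xin f i) \<subseteq> vecs L" for i by (rule range_Xin) (rule f_len)
  have fX: "finite (range (Xin f i))" for i using rX[of i] finite_vecs by (rule finite_subset)
  have fZ: "finite (range (Zv f i))" for i by (rule finite_range_Zv) (rule f_len)
  have fW: "fst ` set_pmf P \<subseteq> vecs (L * N1)" unfolding P_def by (rule fst_set_joint)
  have fWf: "finite (fst ` set_pmf P)" using fW finite_vecs by (rule finite_subset)
  have Zv_eq: "(\<lambda>\<omega>. (Y1past f i \<omega>, Spast i (snd (snd (snd \<omega>))))) = Zv f i" for i
    by (simp add: Zv_def fun_eq_iff)
  have cmi_i: "cmi P (Xin f i) fst (Zv f i) = a i - bb i" for i
    unfolding a_def bb_def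
  proof (rule cmi_Hc)
    show "countable (range (Xin f i))" using fX by (rule countable_finite)
    show "countable (range (fst :: 'f list \<times> 'f list \<times> 'r \<times> (nat \<Rightarrow> chstate) \<Rightarrow> 'f list))"
      by (rule countable_subset[OF subset_UNIV]) simp
    show "countable (range (Zv f i))" using fZ by (rule countable_finite)
    show "finite (Xin f i ` set_pmf P)" using fX by (rule finite_subset[rotated]) auto
    show "finite (fst ` set_pmf P)" by (rule fWf)
    show "finite (Zv f i ` set_pmf P)" using fZ by (rule finite_subset[rotated]) auto
  qed
  have step: "a (Suc i) = (1 - \<delta>1) * bb i + \<delta>1 * a i" if i: "i \<in> {1..n}" for i
  proof -
    define E where "E = map_pmf (\<lambda>\<omega>. (fst \<omega>, Zv f i \<omega>, Xin f i \<omega>)) P"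
    have fE: "finite (set_pmf E)"
    proof -
      have "set_pmf E \<subseteq> fst ` set_pmf P \<times> range (Zv f i) \<times> range (Xin f i)"
        unfolding E_def by auto
      moreover have "finite (fst ` set_pmf P \<times> range (Zv f i) \<times> range (Xin f i))"
        using fWf fZ fX by simp
      ultimately show ?thesis by (rule finite_subset)
    qed
    have inj: "inj (\<lambda>(z0 :: 'f list option list \<times> chstate list, y :: chstate, yo :: 'f list option). (fst z0 @ [yo], snd z0 @ [y]))"
      by (auto simp: inj_def prod_eq_iff)
    have "a (Suc i) = Hc (map_pmf (\<lambda>(y,(w,z,x)). (w, (z, y, if bob_rx y then Some x else None))) (pair_pmf (state_pmf \<delta>1 \<delta>2) E))"
      unfolding a_def law_step[OF i P_def] E_def by (rule Hc_inj[OF inj])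
    also have "\<dots> = measure_pmf.prob (state_pmf \<delta>1 \<delta>2) {y. bob_rx y} * Hc (map_pmf (\<lambda>(w,z,x). (w,(x,z))) E)
     + measure_pmf.prob (state_pmf \<delta>1 \<delta>2) {y. \<not> bob_rx y} * Hc (map_pmf (\<lambda>(w,z,x). (w,z)) E)"
      by (rule Hc_key[OF finite_state fE])
    also have "\<dots> = (1 - \<delta>1) * bb i + \<delta>1 * a i"
      using d1 by (simp add: state_bob state_nbob E_def a_def bb_def map_pmf_comp)
    finally show ?thesis .
  qed
  have tele: "(\<Sum>i=1..m. a i - a (Suc i)) = a 1 - a (Suc m)" for m
    by (induction m) simp_all
  have sum_eq: "(\<Sum>i = 1..n. cmi P (Xin f i) fst (Zv f i)) = (a 1 - a (Suc n)) / (1 - \<delta>1)"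
  proof -
    have "(\<Sum>i = 1..n. cmi P (Xin f i) fst (Zv f i)) = (\<Sum>i = 1..n. (a i - a (Suc i)) / (1 - \<delta>1))"
    proof (rule sum.cong[OF refl])
      fix i assume i: "i \<in> {1..n}"
      show "cmi P (Xin f i) fst (Zv f i) = (a i - a (Suc i)) / (1 - \<delta>1)"
        using step[OF i] d1 unfolding cmi_i by (simp add: field_simps)
    qed
    also have "\<dots> = (a 1 - a (Suc n)) / (1 - \<delta>1)"
      using tele[of n] by (simp add: sum_divide_distrib[symmetric])
    finally show ?thesis .
  qed
  have cardv: "log 2 (real (card (vecs (L * N1) :: 'f list set))) = Q0"
    unfolding card_vecs Q0_def by (simp add: log_nat_power)
  have a1: "a 1 = Q0"
  proof -
    have "map_pmf (\<lambda>\<omega>. (fst \<omega>, Zv f 1 \<omega>)) P = map_pmf (\<lambda>w. (w, ([], []))) (map_pmf fst P)"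
      by (simp add: map_pmf_comp Zv_def Y1past_def Spast_def)
    also have "map_pmf fst P = pmf_of_set (vecs (L * N1))" unfolding P_def by (rule map_fst_joint)
    finally have e: "map_pmf (\<lambda>\<omega>. (fst \<omega>, Zv f 1 \<omega>)) P = map_pmf (\<lambda>w. (w, ([]::'f list option list, []::chstate list))) (pmf_of_set (vecs (L * N1) :: 'f list set))" .
    have "Hc (map_pmf (\<lambda>w. (w, ([]::'f list option list, []::chstate list))) (pmf_of_set (vecs (L * N1) :: 'f list set))) = log 2 (card (vecs (L*N1) :: 'f list set))"
      by (rule Hc_const[OF finite_vecs vecs_ne])
    then show ?thesis unfolding a_def e cardv .
  qed
  have an: "a (Suc n) \<le> h2 \<epsilon> + \<epsilon> * Q0"
  proof -
    define D where "D = map_pmf (\<lambda>\<omega>. (fst \<omega>, Zv f (Suc n) \<omega>)) P"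
    have fD: "finite (set_pmf D)"
    proof -
      have "set_pmf D \<subseteq> fst ` set_pmf P \<times> range (Zv f (Suc n))" unfolding D_def by auto
      moreover have "finite (fst ` set_pmf P \<times> range (Zv f (Suc n)))" using fWf fZ by simp
      ultimately show ?thesis by (rule finite_subset)
    qed
    have sU: "fst ` set_pmf D \<subseteq> vecs (L * N1)" using fW unfolding D_def by auto
    have pe: "measure_pmf.prob D {t. (\<lambda>z. \<phi>1 (fst z)) (snd t) \<noteq> fst t} \<le> \<epsilon>"
    proof -
      have "measure_pmf.prob D {t. (\<lambda>z. \<phi>1 (fst z)) (snd t) \<noteq> fst t} = measure_pmf.prob P {\<omega>. \<phi>1 (Y1past f (n + 1) \<omega>) \<noteq> fst \<omega>}"
        unfolding D_def by (simp add: Zv_def vimage_def)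
      then show ?thesis using dec unfolding P_def by simp
    qed
    have "a (Suc n) \<le> h2 \<epsilon> + \<epsilon> * log 2 (card (vecs (L * N1) :: 'f list set))"
      unfolding a_def D_def[symmetric] by (rule Hc_Fano[OF fD finite_vecs sU pe eps])
    then show ?thesis using cardv by simp
  qed
  have "((1 - \<epsilon>) * real N1 * real L * log 2 (real CARD('f)) - h2 \<epsilon>) / (1 - \<delta>1) \<le> (a 1 - a (Suc n)) / (1 - \<delta>1)"
  proof (rule divide_right_mono)
    show "(1 - \<epsilon>) * real N1 * real L * log 2 (real CARD('f)) - h2 \<epsilon> \<le> a 1 - a (Suc n)"
      using a1 an unfolding Q0_def by (simp add: algebra_simps)
    show "0 \<le> 1 - \<delta>1" using d1 by simp
  qed
  then show ?thesis using sum_eq unfolding Zv_eq P_def by simp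
qed


end
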